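(* Let $n$ be a positive integer, let $X=\{(x,y)\in\mathbb{Z}^2 : \max(|x|,|y|) = n\}$ (the boundary of the digital square $[-n,n]_{\mathbb{Z}}^2$), and let $Y = X\setminus\{(n,n)\}$. Let $d=d_1$ be the Manhattan metric $d_1((x_1,x_2),(y_1,y_2))=|x_1-y_1|+|x_2-y_2|$ and $\kappa=c_1$. Then $H_1(X,Y)=1$ and $\delta_{d}(X,Y)\ge 2n-1$.
   Context: $[a,b]_{\mathbb{Z}}$ denotes $\{k\in\mathbb{Z}: a\le k\le b\}$. In $\mathbb{Z}^2$, two distinct points are $c_1$-adjacent if they differ by exactly $1$ in exactly one coordinate and agree in the other (4-adjacency). A function $f$ between subsets of $\mathbb{Z}^2$ is $c_1$-continuous if whenever $x,x'$ are $c_1$-adjacent, $f(x)$ and $f(x')$ are equal or $c_1$-adjacent. $H_1$ is the Hausdorff metric based on $d_1$: for nonempty finite $A,B$, $H_1(A,B)=\min\{\varepsilon\ge0 : \forall a\in A\ \exists b\in B,\ d_1(a,b)\le\varepsilon,\ \text{and}\ \forall b\in B\ \exists a\in A,\ d_1(a,b)\le\varepsilon\}$. Borsuk's metric of continuity $\delta_d(X,Y)$ is the greatest lower bound of the numbers $t>0$ such that there exist $c_1$-continuous maps $f:X\to Y$ and $g:Y\to X$ with $d(x,f(x))\le t$ for all $x\in X$ and $d(y,g(y))\le t$ for all $y\in Y$. *)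

theory Defs
  imports "HOL-Analysis.Analysis"
begin

type_synonym pt = "int \<times> int"

definition d1 :: "pt \<Rightarrow> pt \<Rightarrow> int" where
  "d1 p q = \<bar>fst p - fst q\<bar> + \<bar>snd p - snd q\<bar>"

definition c1_adj :: "pt \<Rightarrow> pt \<Rightarrow> bool" where
  "c1_adj p q \<longleftrightarrow> p \<noteq> q \<and>
     ((fst p = fst q \<and> \<bar>snd p - snd q\<bar> = 1) \<or> (snd p = snd q \<and> \<bar>fst p - fst q\<bar> = 1))"

definition c1_continuous :: "pt set \<Rightarrow> pt set \<Rightarrow> (pt \<Rightarrow> pt) \<Rightarrow> bool" where
  "c1_continuous X Y f \<longleftrightarrow> f ` X \<subseteq> Y \<and>
     (\<forall>x\<in>X. \<forall>x'\<in>X. c1_adj x x' \<longrightarrow> f x = f x' \<or> c1_adj (f x) (f x'))"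

definition hausdorff1 :: "pt set \<Rightarrow> pt set \<Rightarrow> real" where
  "hausdorff1 A B = Inf {\<epsilon>::real. \<epsilon> \<ge> 0 \<and>
      (\<forall>a\<in>A. \<exists>b\<in>B. real_of_int (d1 a b) \<le> \<epsilon>) \<and>
      (\<forall>b\<in>B. \<exists>a\<in>A. real_of_int (d1 a b) \<le> \<epsilon>)}"

definition borsuk_delta1 :: "pt set \<Rightarrow> pt set \<Rightarrow> real" where
  "borsuk_delta1 X Y = Inf {t::real. t > 0 \<and>
      (\<exists>f g. c1_continuous X Y f \<and> c1_continuous Y X g \<and>
         (\<forall>x\<in>X. real_of_int (d1 x (f x)) \<le> t) \<and>
         (\<forall>y\<in>Y. real_of_int (d1 y (g y)) \<le> t))}"

definition digital_square_boundary :: "int \<Rightarrow> pt set" where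
  "digital_square_boundary n = {p. max \<bar>fst p\<bar> \<bar>snd p\<bar> = n}"

end

theory Submission imports Defs begin
definition sq :: "int \<Rightarrow> int \<Rightarrow> pt" where
 "sq n k = (if k \<le> 2*n then (n, n-k) else if k \<le> 4*n then (3*n-k, -n)
            else if k \<le> 6*n then (-n, k-5*n) else (k-7*n, n))"
definition pp :: "int \<Rightarrow> int \<Rightarrow> pt" where "pp n i = sq n (i mod (8*n))"
definition th :: "int \<Rightarrow> pt \<Rightarrow> int" where
 "th n x = (if fst x = n \<and> snd x > -n then n - snd x else if snd x = -n \<and> fst x > -n then 3*n - fst x
   else if fst x = -n \<and> snd x < n then snd x + 5*n else fst x + 7*n)"

lemma L1: "0 < n \<Longrightarrow> 0 \<le> k \<Longrightarrow> k < 8*n \<Longrightarrow> sq n k \<in> digital_square_boundary n"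
  by (auto simp: sq_def digital_square_boundary_def)
lemma L2: "0 < n \<Longrightarrow> 0 \<le> k \<Longrightarrow> k < 8*n - 1 \<Longrightarrow> c1_adj (sq n k) (sq n (k+1))"
  by (auto simp: sq_def c1_adj_def)
lemma L2b: "0 < n \<Longrightarrow> c1_adj (sq n (8*n-1)) (sq n 0)"
  by (auto simp: sq_def c1_adj_def)
lemma L2p: assumes "0 < n" shows "c1_adj (pp n i) (pp n (i+1))"
proof -
  have r: "0 \<le> i mod (8*n)" "i mod (8*n) < 8*n" using assms by auto
  show ?thesis
  proof (cases "i mod (8*n) = 8*n-1")
    case True
    then have "(i+1) mod (8*n) = 0" by (metis add.commute diff_add_cancel mod_add_right_eq mod_self)
    then show ?thesis using True L2b assms by (simp add: pp_def)
  next
    case False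
    have "(i+1) mod (8*n) = (i mod (8*n) + 1) mod (8*n)" by (simp add: mod_add_left_eq)
    also have "\<dots> = i mod (8*n) + 1" using r False by (intro mod_pos_pos_trivial) auto
    finally have "(i+1) mod (8*n) = i mod (8*n) + 1" .
    have "c1_adj (sq n (i mod (8*n))) (sq n (i mod (8*n) + 1))"
      using False r by (intro L2 assms) auto
    then show ?thesis using \<open>(i+1) mod (8*n) = i mod (8*n) + 1\<close> by (simp add: pp_def)
  qed
qed
lemma Lpp_in: "0 < n \<Longrightarrow> pp n i \<in> digital_square_boundary n"
  unfolding pp_def by (rule L1) auto
lemma L4': "0 < n \<Longrightarrow> max \<bar>a\<bar> \<bar>b\<bar> = n \<Longrightarrow> max \<bar>c\<bar> \<bar>d\<bar> = n \<Longrightarrow>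
   (a,b) \<noteq> (n,n) \<Longrightarrow> (c,d) \<noteq> (n,n) \<Longrightarrow> (a = c \<and> \<bar>b - d\<bar> = 1) \<or> (b = d \<and> \<bar>a - c\<bar> = 1) \<Longrightarrow> \<bar>th n (a,b) - th n (c,d)\<bar> = 1"
  unfolding th_def fst_conv snd_conv by (simp add: abs_if max_def split: if_splits; arith)
lemma L3': "0 < n \<Longrightarrow> max \<bar>a\<bar> \<bar>b\<bar> = n \<Longrightarrow> 0 \<le> th n (a,b) \<and> th n (a,b) < 8*n \<and> sq n (th n (a,b)) = (a,b)"
  unfolding th_def sq_def fst_conv snd_conv by (simp add: abs_if max_def split: if_splits; arith)
lemma L3: "0 < n \<Longrightarrow> x \<in> digital_square_boundary n \<Longrightarrow> 0 \<le> th n x \<and> th n x < 8*n \<and> sq n (th n x) = x"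
  by (cases x) (simp add: L3' digital_square_boundary_def)
lemma L4: "0 < n \<Longrightarrow> x \<in> digital_square_boundary n \<Longrightarrow> y \<in> digital_square_boundary n \<Longrightarrow>
   x \<noteq> (n,n) \<Longrightarrow> y \<noteq> (n,n) \<Longrightarrow> c1_adj x y \<Longrightarrow> \<bar>th n x - th n y\<bar> = 1"
  by (cases x; cases y) (simp add: L4' c1_adj_def digital_square_boundary_def)
lemma L5: "0 < n \<Longrightarrow> x \<in> digital_square_boundary n \<Longrightarrow> x \<noteq> (n,n) \<Longrightarrow> th n x \<noteq> 0"
  using L3 by (metis sq_def diff_zero mult_nonneg_nonneg order.order_iff_strict zero_le_numeral)
lemma L6: assumes "0 < n" shows "pp n (i + 4*n) = (- fst (pp n i), - snd (pp n i))"
proof -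
  define k where "k = i mod (8*n)"
  have r: "0 \<le> k" "k < 8*n" using assms by (auto simp: k_def)
  have "(i + 4*n) mod (8*n) = (k + 4*n) mod (8*n)" by (simp add: k_def mod_add_left_eq)
  also have "\<dots> = (if k < 4*n then k + 4*n else k - 4*n)"
  proof (cases "k < 4*n")
    case True then show ?thesis using r by (simp add: mod_pos_pos_trivial)
  next
    case False
    have "(k + 4*n) mod (8*n) = ((k - 4*n) + 8*n) mod (8*n)" by (rule arg_cong[where f="\<lambda>x. x mod (8*n)"]) simp
    also have "\<dots> = (k - 4*n) mod (8*n)" by (rule mod_add_self2)
    also have "\<dots> = k - 4*n" using r False by (intro mod_pos_pos_trivial) auto
    finally show ?thesis using False by simp
  qed
  finally show ?thesis using r assms unfolding pp_def k_def[symmetric] by (auto simp: sq_def)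
qed
lemma L7: assumes "0 < n" shows "pp n (i - 4*n + c) = pp n (i + 4*n + c)"
proof -
  have "i + 4*n + c = (i - 4*n + c) + 8*n" by simp
  then show ?thesis unfolding pp_def by (metis mod_add_self2)
qed
lemma L8: "x \<in> digital_square_boundary n \<Longrightarrow> d1 x (- fst x, - snd x) \<ge> 2*n"
  by (auto simp: d1_def digital_square_boundary_def max_def split: if_splits)

lemma ivt: assumes "(a::int) \<le> b" "e a \<ge> c - 1" "e b \<le> (c::int)" "\<forall>i. a \<le> i \<and> i < b \<longrightarrow> e (i+1) \<ge> e i - 2"
  shows "\<exists>i. a \<le> i \<and> i \<le> b \<and> c - 1 \<le> e i \<and> e i \<le> c"
proof -
  have "\<And>j. a \<le> j \<Longrightarrow> j \<le> b \<longrightarrow> e j \<le> c \<longrightarrow> (\<exists>i. a \<le> i \<and> i \<le> j \<and> c - 1 \<le> e i \<and> e i \<le> c)"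
  proof -
    fix j :: int assume "a \<le> j"
    then show "j \<le> b \<longrightarrow> e j \<le> c \<longrightarrow> (\<exists>i. a \<le> i \<and> i \<le> j \<and> c - 1 \<le> e i \<and> e i \<le> c)"
    proof (induction j rule: int_ge_induct)
      case base then show ?case using assms by auto
    next
      case (step j)
      show ?case
      proof (intro impI)
        assume h: "j + 1 \<le> b" "e (j+1) \<le> c"
        show "\<exists>i. a \<le> i \<and> i \<le> j + 1 \<and> c - 1 \<le> e i \<and> e i \<le> c"
        proof (cases "e j \<le> c")
          case True then show ?thesis using step h by force
        next
          case False then show ?thesis using step h assms(4)[rule_format, of j] by (intro exI[of _ "j+1"]) auto
        qed
      qed
    qed
  qed
  then show ?thesis using assms by auto
qed

lemma adj_d1: "c1_adj x y \<Longrightarrow> d1 x y \<le> 1"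
  by (auto simp: c1_adj_def d1_def)
lemma d1_tri: "d1 x z \<ge> d1 x y - d1 z y"
  unfolding d1_def by arith

lemma antip: assumes "0 < n" "c = 0 \<or> c = -1" shows "d1 (pp n i) (pp n (i + 4*n + c)) \<ge> 2*n - 1"
proof -
  have a: "d1 (pp n i) (pp n (i + 4*n)) \<ge> 2*n" using L6[OF assms(1)] L8 Lpp_in[OF assms(1)] by metis
  show ?thesis
  proof (cases "c = 0")
    case True then show ?thesis using a by simp
  next
    case False
    then have c: "c = -1" using assms by auto
    have "c1_adj (pp n (i + 4*n - 1)) (pp n (i + 4*n - 1 + 1))" by (rule L2p[OF assms(1)])
    then have "d1 (pp n (i + 4*n + c)) (pp n (i + 4*n)) \<le> 1" using c adj_d1 by simp
    then show ?thesis using a d1_tri[of "pp n i" "pp n (i+4*n)" "pp n (i + 4*n + c)"]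
      by linarith
  qed
qed

lemma main: assumes n: "0 < n" and X: "X = digital_square_boundary n" and Y: "Y = X - {(n,n)}"
  and f: "c1_continuous X Y f"
  shows "\<exists>x\<in>X. d1 x (f x) \<ge> 2*n - 1"
proof -
  define h where "h i = th n (f (pp n i))" for i
  have fY: "f (pp n i) \<in> Y" for i using f Lpp_in[OF n] X unfolding c1_continuous_def by auto
  have hr: "1 \<le> h i \<and> h i < 8*n" for i
    using L3[OF n, of "f (pp n i)"] L5[OF n, of "f (pp n i)"] fY[of i] Y X unfolding h_def by auto
  have hp: "pp n (h i) = f (pp n i)" for i
  proof -
    have "h i mod (8*n) = h i" using hr[of i] by simp
    then show ?thesis using L3[OF n, of "f (pp n i)"] fY[of i] Y X unfolding pp_def h_def by auto
  qed
  have hs: "\<bar>h (i+1) - h i\<bar> \<le> 1" for i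
  proof (cases "f (pp n i) = f (pp n (i+1))")
    case True then show ?thesis by (simp add: h_def)
  next
    case False
    then have "c1_adj (f (pp n i)) (f (pp n (i+1)))"
      using f L2p[OF n, of i] Lpp_in[OF n] X unfolding c1_continuous_def by auto
    then have "\<bar>h i - h (i+1)\<bar> = 1" unfolding h_def
      using L4[OF n] fY[of i] fY[of "i+1"] X Y by auto
    then show ?thesis by simp
  qed
  have per: "h (8*n) = h 0" unfolding h_def pp_def by simp
  define e where "e i = h i - i" for i
  have es: "\<forall>i. 0 \<le> i \<and> i < 8*n \<longrightarrow> e (i+1) \<ge> e i - 2"
  proof (intro allI impI)
    fix i :: int
    show "e (i+1) \<ge> e i - 2" using hs[of i] unfolding e_def by (simp add: abs_le_iff)
  qed
  obtain i c where i: "0 \<le> i" and c: "c = 0 \<or> c = -1" and hi: "h i = i + 4*n + c \<or> h i = i - 4*n + c"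
  proof (cases "h 0 \<le> 4*n - 1")
    case True
    have "\<exists>i. 0 \<le> i \<and> i \<le> 8*n \<and> -4*n - 1 \<le> e i \<and> e i \<le> -4*n"
      using ivt[of 0 "8*n" "-4*n" e] es n hr[of 0] True per unfolding e_def by auto
    then obtain i where "0 \<le> i" "-4*n - 1 \<le> e i" "e i \<le> -4*n" by auto
    then show ?thesis by (intro that[of i "e i + 4*n"]) (auto simp: e_def)
  next
    case False
    have "\<exists>i. 0 \<le> i \<and> i \<le> 8*n \<and> 4*n - 1 \<le> e i \<and> e i \<le> 4*n"
      using ivt[of 0 "8*n" "4*n" e] es n hr[of 0] False per unfolding e_def by auto
    then obtain i where "0 \<le> i" "4*n - 1 \<le> e i" "e i \<le> 4*n" by auto
    then show ?thesis by (intro that[of i "e i - 4*n"]) (auto simp: e_def)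
  qed
  have "f (pp n i) = pp n (i + 4*n + c)"
    using hi hp[of i] L7[OF n, of i c] by auto
  then have "d1 (pp n i) (f (pp n i)) \<ge> 2*n - 1" using antip[OF n c] by simp
  then show ?thesis using Lpp_in[OF n] X by auto
qed

theorem theorem2p7:
  fixes n :: int and X Y :: "pt set"
  assumes "n > 0"
    and "X = digital_square_boundary n"
    and "Y = X - {(n, n)}"
  shows "hausdorff1 X Y = 1 \<and> borsuk_delta1 X Y \<ge> real_of_int (2 * n - 1)"
proof
  have nX: "(n,n) \<in> X" "(n-1,n) \<in> X" "(n-1,n) \<noteq> (n,n)"
    using assms by (auto simp: digital_square_boundary_def)
  show "hausdorff1 X Y = 1" unfolding hausdorff1_def
  proof (rule cInf_eq_minimum)
    show "1 \<in> {\<epsilon>::real. \<epsilon> \<ge> 0 \<and>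
      (\<forall>a\<in>X. \<exists>b\<in>Y. real_of_int (d1 a b) \<le> \<epsilon>) \<and>
      (\<forall>b\<in>Y. \<exists>a\<in>X. real_of_int (d1 a b) \<le> \<epsilon>)}"
    proof (intro CollectI conjI ballI)
      fix a assume a: "a \<in> X"
      show "\<exists>b\<in>Y. real_of_int (d1 a b) \<le> 1"
      proof (cases "a = (n,n)")
        case True then show ?thesis using nX assms(3) by (intro bexI[of _ "(n-1,n)"]) (auto simp: d1_def)
      next
        case False then show ?thesis using a assms(3) by (intro bexI[of _ a]) (auto simp: d1_def)
      qed
    next
      fix b assume "b \<in> Y" then show "\<exists>a\<in>X. real_of_int (d1 a b) \<le> 1"
        using assms(3) by (intro bexI[of _ b]) (auto simp: d1_def)
    qed simp
  next
    fix x assume "x \<in> {\<epsilon>::real. \<epsilon> \<ge> 0 \<and>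
      (\<forall>a\<in>X. \<exists>b\<in>Y. real_of_int (d1 a b) \<le> \<epsilon>) \<and>
      (\<forall>b\<in>Y. \<exists>a\<in>X. real_of_int (d1 a b) \<le> \<epsilon>)}"
    then obtain b where b: "b \<in> Y" "real_of_int (d1 (n,n) b) \<le> x" using nX by auto
    have "b \<noteq> (n,n)" using b assms(3) by auto
    then have "d1 (n,n) b \<ge> 1" by (cases b) (auto simp: d1_def)
    then show "1 \<le> x" using b by linarith
  qed
next
  let ?T = "{t::real. t > 0 \<and>
      (\<exists>f g. c1_continuous X Y f \<and> c1_continuous Y X g \<and>
         (\<forall>x\<in>X. real_of_int (d1 x (f x)) \<le> t) \<and>
         (\<forall>y\<in>Y. real_of_int (d1 y (g y)) \<le> t))}"
  have ne: "real_of_int (4*n) \<in> ?T"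
  proof (intro CollectI conjI exI)
    show "c1_continuous X Y (\<lambda>_. (n-1,n))" using assms
      by (auto simp: c1_continuous_def digital_square_boundary_def)
    show "c1_continuous Y X (\<lambda>y. y)" using assms by (auto simp: c1_continuous_def)
    show "\<forall>x\<in>X. real_of_int (d1 x (n-1,n)) \<le> real_of_int (4*n)" using assms
      by (auto simp: d1_def digital_square_boundary_def max_def split: if_splits)
    show "\<forall>y\<in>Y. real_of_int (d1 y y) \<le> real_of_int (4*n)" using assms by (auto simp: d1_def)
  qed (use assms in auto)
  show "borsuk_delta1 X Y \<ge> real_of_int (2 * n - 1)" unfolding borsuk_delta1_def
  proof (rule cInf_greatest)
    show "?T \<noteq> {}" using ne by blast
  next
    fix t assume "t \<in> ?T"
    then obtain f where f: "c1_continuous X Y f" "\<forall>x\<in>X. real_of_int (d1 x (f x)) \<le> t" by auto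
    obtain x where "x \<in> X" "d1 x (f x) \<ge> 2*n - 1" using main[OF assms f(1)] by auto
    then show "real_of_int (2 * n - 1) \<le> t" using f(2) by force
  qed
qed

end
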